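(* Let $1\le m<n$, let $\mathbf{b}\in\{0,1\}^{n-m}$ with $\mathbf{b}\neq\mathbf{0}_{n-m}$, and let $y\in\mathbb{Q}[t]$. The map \[\mathrm{Tot}(\mathcal{L}^{\mathbb{Q}}_{T^m}(\mathbb{Q}[t];\mathbb{Q}))\to\mathrm{Tot}(\mathcal{L}^{\mathbb{Q}}_{T^n}(\mathbb{Q}[t];\mathbb{Q})),\qquad c\mapsto c_{(-,\mathbf{0})}\otimes y_{(\mathbf{0},\mathbf{b})}\] is a chain map.
   Context: The $n$-chain complex $C^{(n)}=\mathcal{L}^{\mathbb{Q}}_{T^n}(\mathbb{Q}[t];\mathbb{Q})$: in multi-degree $\mathbf{V}=(v_1,\dots,v_n)\in\mathbb{N}^n$, elements are sums of multi-matrices of size $(v_1+1)\times\cdots\times(v_n+1)$ with entries in $\mathbb{Q}[t]$ at coordinates $\mathbf{v}\ne\mathbf{0}_n$ ($\mathbf{0}\le\mathbf{v}\le\mathbf{V}$) and an entry in $\mathbb{Q}$ at $\mathbf{0}_n$ (tensor products over $\mathbb{Q}$; $\mathbb{Q}$ is a $\mathbb{Q}[t]$-module via $t\mapsto0$). In direction $i$ the slices are indexed by $j\in\{0,\dots,v_i\}$; $d_{i,j}$ ($j<v_i$) multiplies slices $j$ and $j+1$ entrywise into one slice and $d_{i,v_i}$ multiplies slice $v_i$ into slice $0$. With $\mathrm{d}_i=\sum_j(-1)^jd_{i,j}$, the total complex has differential $\mathrm{d}=\sum_i(-1)^{v_1+\cdots+v_{i-1}}\mathrm{d}_i$. $\mathbf{0}_k,\mathbf{1}_k$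 are constant vectors of length $k$. For a multi-matrix $c$ in multi-degree $\mathbf{W}\in\mathbb{N}^m$ with entries $c_{\mathbf{a}}$, $c_{(-,\mathbf{0})}\otimes y_{(\mathbf{0},\mathbf{b})}$ is the multi-matrix in multi-degree $(\mathbf{W},\mathbf{1}_{n-m})$ with $c_{\mathbf{a}}$ at coordinate $(\mathbf{a},\mathbf{0}_{n-m})$, $y$ at coordinate $(\mathbf{0}_m,\mathbf{b})$, and $1$ elsewhere; the map is extended linearly. *)

theory Defs
  imports "HOL-Computational_Algebra.Polynomial"
begin

text \<open>A tensor product over Q of copies of Q[t]
(one per nonzero coordinate) and Q (at the zero coordinate) has as Q-basis the monomials,
i.e. exponent assignments e : coordinates -> nat with e(0) = 0.  A basis element of the
total complex is a pair (V, e) of a multi-degree V (a list of length n) and such a monomial.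
A chain is a finitely supported Q-valued function on basis elements.\<close>

type_synonym mono = "nat list \<Rightarrow> nat"
type_synonym basis = "nat list \<times> mono"
type_synonym chain = "basis \<Rightarrow> rat"

definition coords :: "nat list \<Rightarrow> nat list set" where
  "coords V = {v. length v = length V \<and> (\<forall>i<length V. v ! i \<le> V ! i)}"

definition valid_basis :: "nat \<Rightarrow> basis \<Rightarrow> bool" where
  "valid_basis n b \<longleftrightarrow> length (fst b) = n \<and>
     (\<forall>v. snd b v \<noteq> 0 \<longrightarrow> v \<in> coords (fst b) \<and> v \<noteq> replicate n 0)"

text \<open>Slice reindexing of the face map d_{i,j} in a direction of degree vi:
for j < vi slices j and j+1 merge into slice j; for j = vi slice vi goes into slice 0.\<close>
definition slice_map :: "nat \<Rightarrow> nat \<Rightarrow> nat \<Rightarrow> nat" where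
  "slice_map vi j k = (if j < vi then (if k \<le> j then k else k - 1) else (if k = vi then 0 else k))"

definition face_coord :: "nat \<Rightarrow> nat \<Rightarrow> nat list \<Rightarrow> nat list \<Rightarrow> nat list" where
  "face_coord i j V v = v[i := slice_map (V ! i) j (v ! i)]"

definition face_deg :: "nat \<Rightarrow> nat list \<Rightarrow> nat list" where
  "face_deg i V = V[i := V ! i - 1]"

text \<open>Entrywise multiplication: exponents of entries landing on the same coordinate add.\<close>
definition face_mono :: "nat \<Rightarrow> nat \<Rightarrow> nat list \<Rightarrow> mono \<Rightarrow> mono" where
  "face_mono i j V e = (\<lambda>w. \<Sum>v\<in>{v \<in> coords V. face_coord i j V v = w}. e v)"

text \<open>The face map on a basis element; a positive power of t landing at the zero
coordinate (where the entry lies in Q, t acting by 0) kills the term.\<close>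
definition face :: "nat \<Rightarrow> nat \<Rightarrow> basis \<Rightarrow> chain" where
  "face i j b = (let V = fst b; e' = face_mono i j V (snd b) in
     if e' (replicate (length V) 0) = 0
     then (\<lambda>b'. if b' = (face_deg i V, e') then 1 else 0)
     else (\<lambda>_. 0))"

definition basis_diff :: "basis \<Rightarrow> chain" where
  "basis_diff b = (\<lambda>b'. \<Sum>i<length (fst b).
      if fst b ! i = 0 then 0
      else (-1) ^ sum_list (take i (fst b)) *
           (\<Sum>j\<le>fst b ! i. (-1) ^ j * face i j b b'))"

definition linext :: "(basis \<Rightarrow> chain) \<Rightarrow> chain \<Rightarrow> chain" where
  "linext f c = (\<lambda>b'. \<Sum>b\<in>{b. c b \<noteq> 0}. c b * f b b')"

definition chain_diff :: "chain \<Rightarrow> chain" where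
  "chain_diff = linext basis_diff"

text \<open>c_{(-,0)} tensor t^k_{(0,bv)} on a basis element (W,e): entries e at (a,0),
t^k at (0,bv), 1 elsewhere, in multi-degree (W, 1_{n-m}).\<close>
definition tensor_mono :: "nat \<Rightarrow> nat list \<Rightarrow> mono \<Rightarrow> nat \<Rightarrow> mono" where
  "tensor_mono m bv e k = (\<lambda>w.
     if w = replicate m 0 @ bv then k
     else if length w = m + length bv \<and> drop m w = replicate (length bv) 0 then e (take m w)
     else 0)"

definition tensor_basis :: "nat list \<Rightarrow> rat poly \<Rightarrow> basis \<Rightarrow> chain" where
  "tensor_basis bv y b = (\<lambda>b'. \<Sum>k\<le>degree y. coeff y k *
     (if b' = (fst b @ replicate (length bv) 1, tensor_mono (length (fst b)) bv (snd b) k)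
      then 1 else 0))"

definition tensor_map :: "nat list \<Rightarrow> rat poly \<Rightarrow> chain \<Rightarrow> chain" where
  "tensor_map bv y = linext (tensor_basis bv y)"

end

theory Submission
  imports Defs
begin

lemma linext_S:
  assumes "finite S" "\<And>b. c b \<noteq> 0 \<Longrightarrow> b \<in> S"
  shows "linext f c x = (\<Sum>b\<in>S. c b * f b x)"
  unfolding linext_def
proof (rule sum.mono_neutral_left)
  show "finite S" by fact
  show "{b. c b \<noteq> 0} \<subseteq> S" using assms(2) by blast
  show "\<forall>i\<in>S - {b. c b \<noteq> 0}. c i * f i x = 0" by auto
qed

lemma linext_deltas:
  assumes "finite K"
  shows "linext f (\<lambda>b. \<Sum>k\<in>K. a k * (if b = g k then 1 else 0)) x = (\<Sum>k\<in>K. a k * f (g k) x)"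
proof -
  have "linext f (\<lambda>b. \<Sum>k\<in>K. a k * (if b = g k then 1 else 0)) x
      = (\<Sum>s\<in>g ` K. (\<Sum>k\<in>K. a k * (if s = g k then 1 else 0)) * f s x)"
  proof (rule linext_S)
    show "finite (g ` K)" using assms by simp
    fix b assume "(\<Sum>k\<in>K. a k * (if b = g k then 1 else 0)) \<noteq> 0"
    then have "\<exists>k\<in>K. a k * (if b = g k then 1 else 0) \<noteq> 0"
      by (meson sum.neutral)
    then obtain k where "k \<in> K" "a k * (if b = g k then 1 else 0) \<noteq> 0" by blast
    then show "b \<in> g ` K" by (auto split: if_splits)
  qed
  also have "\<dots> = (\<Sum>k\<in>K. a k * (\<Sum>s\<in>g ` K. (if s = g k then 1 else 0) * f s x))"
  proof -
    have "(\<Sum>s\<in>g ` K. (\<Sum>k\<in>K. a k * (if s = g k then 1 else 0)) * f s x)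
        = (\<Sum>s\<in>g ` K. \<Sum>k\<in>K. a k * ((if s = g k then 1 else 0) * f s x))"
      by (simp add: sum_distrib_right mult.assoc)
    also have "\<dots> = (\<Sum>k\<in>K. \<Sum>s\<in>g ` K. a k * ((if s = g k then 1 else 0) * f s x))"
      by (rule sum.swap)
    also have "\<dots> = (\<Sum>k\<in>K. a k * (\<Sum>s\<in>g ` K. (if s = g k then 1 else 0) * f s x))"
      by (simp add: sum_distrib_left)
    finally show ?thesis .
  qed
  also have "\<dots> = (\<Sum>k\<in>K. a k * f (g k) x)"
  proof (rule sum.cong[OF refl])
    fix k assume "k \<in> K"
    have "(\<Sum>s\<in>g ` K. (if s = g k then 1 else 0) * f s x) = (\<Sum>s\<in>g ` K. (if s = g k then f s x else 0))"
      by (rule sum.cong) auto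
    also have "\<dots> = f (g k) x" using \<open>k \<in> K\<close> assms by (simp add: sum.delta)
    finally show "a k * (\<Sum>s\<in>g ` K. (if s = g k then 1 else 0) * f s x) = a k * f (g k) x" by simp
  qed
  finally show ?thesis .
qed

lemma linext_deltas2:
  assumes "finite I" "\<And>i. i \<in> I \<Longrightarrow> finite (J i)"
  shows "linext f (\<lambda>b. \<Sum>i\<in>I. \<Sum>j\<in>J i. a i j * (if b = g i j then 1 else 0)) x
       = (\<Sum>i\<in>I. \<Sum>j\<in>J i. a i j * f (g i j) x)"
proof -
  have e: "(\<lambda>b. \<Sum>i\<in>I. \<Sum>j\<in>J i. a i j * (if b = g i j then 1 else 0))
     = (\<lambda>b. \<Sum>p\<in>Sigma I J. a (fst p) (snd p) * (if b = g (fst p) (snd p) then 1 else 0))"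
    using assms by (simp add: sum.Sigma split_def)
  have "linext f (\<lambda>b. \<Sum>p\<in>Sigma I J. a (fst p) (snd p) * (if b = g (fst p) (snd p) then 1 else 0)) x
     = (\<Sum>p\<in>Sigma I J. a (fst p) (snd p) * f (g (fst p) (snd p)) x)"
    by (rule linext_deltas) (use assms in auto)
  also have "\<dots> = (\<Sum>i\<in>I. \<Sum>j\<in>J i. a i j * f (g i j) x)"
    using assms by (simp add: sum.Sigma split_def)
  finally show ?thesis unfolding e .
qed

lemma linext_linext:
  assumes "finite {b. c b \<noteq> 0}" "\<And>b. c b \<noteq> 0 \<Longrightarrow> finite {x. g b x \<noteq> 0}"
  shows "linext f (linext g c) x = (\<Sum>b\<in>{b. c b \<noteq> 0}. c b * linext f (g b) x)"
proof -
  define C where "C = {b. c b \<noteq> 0}"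
  define S where "S = (\<Union>b\<in>C. {x. g b x \<noteq> 0})"
  have fS: "finite S" unfolding S_def C_def using assms by auto
  have "linext f (linext g c) x = (\<Sum>b'\<in>S. linext g c b' * f b' x)"
  proof (rule linext_S[OF fS])
    fix b' assume "linext g c b' \<noteq> 0"
    then have "\<exists>b\<in>C. c b * g b b' \<noteq> 0" unfolding linext_def C_def
      by (meson sum.neutral)
    then obtain b where "b \<in> C" "c b * g b b' \<noteq> 0" by blast
    then show "b' \<in> S" unfolding S_def by auto
  qed
  also have "\<dots> = (\<Sum>b'\<in>S. \<Sum>b\<in>C. c b * (g b b' * f b' x))"
    unfolding linext_def C_def by (simp add: sum_distrib_right mult.assoc)
  also have "\<dots> = (\<Sum>b\<in>C. c b * (\<Sum>b'\<in>S. g b b' * f b' x))"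
    by (subst sum.swap) (simp add: sum_distrib_left)
  also have "\<dots> = (\<Sum>b\<in>C. c b * linext f (g b) x)"
  proof (rule sum.cong[OF refl])
    fix b assume "b \<in> C"
    have "linext f (g b) x = (\<Sum>b'\<in>S. g b b' * f b' x)"
      by (rule linext_S[OF fS]) (use \<open>b \<in> C\<close> in \<open>auto simp: S_def\<close>)
    then show "c b * (\<Sum>b'\<in>S. g b b' * f b' x) = c b * linext f (g b) x" by simp
  qed
  finally show ?thesis unfolding C_def .
qed

lemma finite_coords: "finite (coords V)"
proof (rule finite_subset)
  show "coords V \<subseteq> {xs. set xs \<subseteq> {..sum_list V} \<and> length xs = length V}"
  proof
    fix v assume v: "v \<in> coords V"
    have "\<forall>a\<in>set v. a \<le> sum_list V"
    proof
      fix a assume "a \<in> set v"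
      then obtain i where i: "i < length v" "v ! i = a" by (auto simp: in_set_conv_nth)
      then have "v ! i \<le> V ! i" "i < length V" using v by (auto simp: coords_def)
      then show "a \<le> sum_list V" using i elem_le_sum_list[of i V] by simp
    qed
    then show "v \<in> {xs. set xs \<subseteq> {..sum_list V} \<and> length xs = length V}"
      using v by (auto simp: coords_def)
  qed
  show "finite {xs. set xs \<subseteq> {..sum_list V} \<and> length xs = length V}"
    by (rule finite_lists_length_eq) simp
qed

lemma coords_append:
  assumes "length u = length W"
  shows "(u @ t \<in> coords (W @ V)) = (u \<in> coords W \<and> t \<in> coords V)"
proof
  assume a: "u @ t \<in> coords (W @ V)"
  have l: "length t = length V" using a assms by (simp add: coords_def)
  have "\<forall>i<length W. u ! i \<le> W ! i"
  proof (intro allI impI)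
    fix i assume "i < length W"
    moreover have "i < length W + length V" using \<open>i < length W\<close> by simp
    ultimately show "u ! i \<le> W ! i" using a assms unfolding coords_def
      by (auto simp: nth_append dest!: spec[of _ i])
  qed
  moreover have "\<forall>i<length V. t ! i \<le> V ! i"
  proof (intro allI impI)
    fix i assume "i < length V"
    then have "length W + i < length (W @ V)" by simp
    then have "(u @ t) ! (length W + i) \<le> (W @ V) ! (length W + i)" using a unfolding coords_def by blast
    then show "t ! i \<le> V ! i" using assms by (simp add: nth_append)
  qed
  ultimately show "u \<in> coords W \<and> t \<in> coords V" using assms l by (simp add: coords_def)
next
  assume a: "u \<in> coords W \<and> t \<in> coords V"
  have "(u @ t) ! i \<le> (W @ V) ! i" if "i < length (W @ V)" for i
  proof (cases "i < length W")
    case True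
    then show ?thesis using a assms by (simp add: nth_append coords_def)
  next
    case False
    then have "i - length W < length V" using that by simp
    then show ?thesis using a assms False by (simp add: nth_append coords_def)
  qed
  then show "u @ t \<in> coords (W @ V)" using a assms
    unfolding coords_def by simp
qed

lemma fc_append:
  assumes "i < length u" "length u = length W"
  shows "face_coord i j (W @ V) (u @ t) = face_coord i j W u @ t"
  using assms by (simp add: face_coord_def nth_append list_update_append)

lemma length_fc[simp]: "length (face_coord i j V v) = length v"
  by (simp add: face_coord_def)

lemma slice_map_0[simp]: "slice_map vi j 0 = 0"
  by (simp add: slice_map_def)

lemma tm_split:
  assumes "bv \<noteq> replicate (length bv) 0"
  shows "tensor_mono m bv e k v =
    (if v = replicate m 0 @ bv then k else 0) +
    (if length v = m + length bv \<and> drop m v = replicate (length bv) 0 then e (take m v) else 0)"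
  using assms unfolding tensor_mono_def by auto

lemma tensor_face:
  assumes i: "i < length W" and lb: "length bv = r" and bv01: "set bv \<subseteq> {0,1}"
    and bvnz: "bv \<noteq> replicate r 0"
  shows "face_mono i j (W @ replicate r 1) (tensor_mono (length W) bv e k)
       = tensor_mono (length W) bv (face_mono i j W e) k"
proof (rule ext)
  fix w
  define m where "m = length W"
  define z where "z = replicate m 0 @ bv"
  define W' where "W' = W @ replicate r 1"
  define P where "P v \<longleftrightarrow> length v = m + length bv \<and> drop m v = replicate (length bv) 0" for v :: "nat list"
  define A where "A = {v \<in> coords W'. face_coord i j W' v = w}"
  have bvnz': "bv \<noteq> replicate (length bv) 0" using bvnz lb by simp
  have fA: "finite A" unfolding A_def using finite_coords by simp
  have "face_mono i j W' (tensor_mono m bv e k) w = (\<Sum>v\<in>A. tensor_mono m bv e k v)"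
    unfolding face_mono_def A_def ..
  also have "\<dots> = (\<Sum>v\<in>A. (if v = z then k else 0)) + (\<Sum>v\<in>A. (if P v then e (take m v) else 0))"
    unfolding tm_split[OF bvnz'] z_def P_def by (rule sum.distrib)
  also have "(\<Sum>v\<in>A. (if v = z then k else 0)) = (if w = z then k else 0)"
  proof -
    have zc: "z \<in> coords W'" unfolding z_def W'_def
    proof (subst coords_append)
      show "length (replicate m 0) = length W" by (simp add: m_def)
      have "bv ! q \<le> 1" if "q < r" for q
      proof -
        have "bv ! q \<in> set bv" using that lb by simp
        then have "bv ! q \<in> {0,1}" using bv01 by blast
        then show ?thesis by auto
      qed
      then have "bv \<in> coords (replicate r 1)" using lb by (simp add: coords_def)
      then show "replicate m 0 \<in> coords W \<and> bv \<in> coords (replicate r 1)"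
        by (simp add: coords_def m_def)
    qed
    have zi: "z ! i = 0" unfolding z_def using i by (simp add: nth_append m_def)
    have zf: "face_coord i j W' z = z" unfolding face_coord_def zi using zi by (metis list_update_id slice_map_0)
    have "(\<Sum>v\<in>A. (if v = z then k else 0)) = (if z \<in> A then k else 0)"
      using fA by (simp add: sum.delta')
    also have "(z \<in> A) = (w = z)" unfolding A_def using zc zf by auto
    finally show ?thesis .
  qed
  also have "(\<Sum>v\<in>A. (if P v then e (take m v) else 0)) = (if P w then face_mono i j W e (take m w) else 0)"
  proof -
    have "(\<Sum>v\<in>A. (if P v then e (take m v) else 0)) = (\<Sum>v\<in>{v\<in>A. P v}. e (take m v))"
      using fA by (simp add: sum.inter_filter)
    also have "\<dots> = (if P w then face_mono i j W e (take m w) else 0)"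
    proof (cases "P w")
      case True
      have eq: "{v\<in>A. P v} = (\<lambda>u. u @ replicate r 0) ` {u \<in> coords W. face_coord i j W u = take m w}"
      proof (rule set_eqI, rule iffI)
        fix v assume v: "v \<in> {v\<in>A. P v}"
        define u where "u = take m v"
        have lu: "length u = length W" using v unfolding u_def P_def m_def by auto
        have vu: "v = u @ replicate r 0" using v lb unfolding u_def P_def
          by (metis (mono_tags, lifting) append_take_drop_id mem_Collect_eq)
        have "u @ replicate r 0 \<in> coords W'" using v vu unfolding A_def by auto
        then have uc: "u \<in> coords W" unfolding W'_def using coords_append[OF lu] by simp
        have "face_coord i j W' v = w" using v unfolding A_def by simp
        then have "face_coord i j W u @ replicate r 0 = w"
          unfolding vu W'_def using fc_append[of i u W] i lu by simp
        then have "face_coord i j W u = take m w" using lu m_def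
          by (metis append_eq_conv_conj length_fc)
        then show "v \<in> (\<lambda>u. u @ replicate r 0) ` {u \<in> coords W. face_coord i j W u = take m w}"
          using vu uc by blast
      next
        fix v assume "v \<in> (\<lambda>u. u @ replicate r 0) ` {u \<in> coords W. face_coord i j W u = take m w}"
        then obtain u where u: "u \<in> coords W" "face_coord i j W u = take m w" and vu: "v = u @ replicate r 0"
          by blast
        have lu: "length u = length W" using u by (simp add: coords_def)
        have "replicate r 0 \<in> coords (replicate r 1)" by (simp add: coords_def)
        then have vc: "v \<in> coords W'" unfolding vu W'_def using coords_append[OF lu] u by simp
        have "face_coord i j W' v = take m w @ replicate r 0"
          unfolding vu W'_def using fc_append[of i u W] i lu u by simp
        also have "\<dots> = w" using True lb unfolding P_def
          by (metis append_take_drop_id)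
        finally have "v \<in> A" using vc unfolding A_def by simp
        moreover have "P v" unfolding P_def vu using lu lb m_def by simp
        ultimately show "v \<in> {v\<in>A. P v}" by simp
      qed
      have inj: "inj_on (\<lambda>u. u @ replicate r 0) {u \<in> coords W. face_coord i j W u = take m w}"
        by (rule inj_onI) simp
      have "(\<Sum>v\<in>{v\<in>A. P v}. e (take m v)) = (\<Sum>u\<in>{u \<in> coords W. face_coord i j W u = take m w}. e (take m (u @ replicate r 0)))"
        unfolding eq by (simp add: sum.reindex[OF inj])
      also have "\<dots> = (\<Sum>u\<in>{u \<in> coords W. face_coord i j W u = take m w}. e u)"
        by (rule sum.cong) (auto simp: coords_def m_def)
      finally show ?thesis using True unfolding face_mono_def by simp
    next
      case False
      have "{v\<in>A. P v} = {}"
      proof (rule ccontr)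
        assume "{v\<in>A. P v} \<noteq> {}"
        then obtain v where v: "v \<in> A" "P v" by blast
        then have w: "w = face_coord i j W' v" unfolding A_def by simp
        have "P w" unfolding w face_coord_def P_def using v(2) i m_def
          by (simp add: P_def drop_update_cancel)
        then show False using False by simp
      qed
      then show ?thesis using False by (simp only: sum.empty) simp
    qed
    finally show ?thesis .
  qed
  finally show "face_mono i j (W @ replicate r 1) (tensor_mono (length W) bv e k) w
       = tensor_mono (length W) bv (face_mono i j W e) k w"
    unfolding tm_split[OF bvnz', of "length W"] W'_def m_def z_def P_def by simp
qed

definition coef :: "nat list \<Rightarrow> mono \<Rightarrow> nat \<Rightarrow> nat \<Rightarrow> rat" where
  "coef W e i j = (if W ! i = 0 then 0 else (-1) ^ sum_list (take i W) * (-1) ^ j *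
     (if face_mono i j W e (replicate (length W) 0) = 0 then 1 else 0))"

lemma bd_form:
  "basis_diff (W, e) = (\<lambda>x. \<Sum>i<length W. \<Sum>j\<le>W ! i.
     coef W e i j * (if x = (face_deg i W, face_mono i j W e) then 1 else 0))"
proof (rule ext)
  fix x
  show "basis_diff (W, e) x = (\<Sum>i<length W. \<Sum>j\<le>W ! i.
     coef W e i j * (if x = (face_deg i W, face_mono i j W e) then 1 else 0))"
    unfolding basis_diff_def fst_conv
  proof (rule sum.cong[OF refl])
    fix i
    show "(if W ! i = 0 then 0 else (-1) ^ sum_list (take i W) * (\<Sum>j\<le>W ! i. (-1) ^ j * face i j (W, e) x))
      = (\<Sum>j\<le>W ! i. coef W e i j * (if x = (face_deg i W, face_mono i j W e) then 1 else 0))"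
      by (cases "W ! i = 0") (auto simp: coef_def face_def Let_def sum_distrib_left intro!: sum.cong)
  qed
qed

lemma face_mono_01:
  assumes "i < length V" "V ! i = 1"
  shows "face_mono i 0 V E = face_mono i 1 V E"
proof -
  have "face_coord i 0 V v = face_coord i 1 V v" if "v \<in> coords V" for v
  proof -
    have "v ! i \<le> 1" using that assms by (auto simp: coords_def)
    then have "slice_map (V ! i) 0 (v ! i) = slice_map (V ! i) 1 (v ! i)"
      using assms(2) by (cases "v ! i") (auto simp: slice_map_def)
    then show ?thesis by (simp add: face_coord_def)
  qed
  then have "{v \<in> coords V. face_coord i 0 V v = w} = {v \<in> coords V. face_coord i 1 V v = w}" for w
    by auto
  then show ?thesis unfolding face_mono_def by simp
qed

lemma C1:
  assumes lb: "length bv = r" and bv01: "set bv \<subseteq> {0,1}" and bvnz: "bv \<noteq> replicate r 0"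
  shows "basis_diff (W @ replicate r 1, tensor_mono (length W) bv e k) x
    = (\<Sum>i<length W. \<Sum>j\<le>W ! i. coef W e i j *
        (if x = (face_deg i W @ replicate r 1, tensor_mono (length W) bv (face_mono i j W e) k) then 1 else 0))"
proof -
  define m where "m = length W"
  define W' where "W' = W @ replicate r 1"
  define E where "E = tensor_mono m bv e k"
  define F where "F i j = (if x = (face_deg i W', face_mono i j W' E) then 1 else 0 :: rat)" for i j
  have lW': "length W' = m + r" unfolding W'_def m_def by simp
  have bvnz': "bv \<noteq> replicate (length bv) 0" using bvnz lb by simp
  have "basis_diff (W', E) x = (\<Sum>i<m + r. \<Sum>j\<le>W' ! i. coef W' E i j * F i j)"
    unfolding bd_form lW' F_def ..
  also have "\<dots> = (\<Sum>i<m. \<Sum>j\<le>W' ! i. coef W' E i j * F i j) + (\<Sum>i\<in>{m..<m+r}. \<Sum>j\<le>W' ! i. coef W' E i j * F i j)"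
  proof -
    have u: "{..<m + r} = {..<m} \<union> {m..<m+r}" by auto
    show ?thesis unfolding u by (rule sum.union_disjoint) auto
  qed
  also have "(\<Sum>i\<in>{m..<m+r}. \<Sum>j\<le>W' ! i. coef W' E i j * F i j) = 0"
  proof (rule sum.neutral, rule ballI)
    fix i assume i: "i \<in> {m..<m+r}"
    have "i - length W < r" using i unfolding m_def by auto
    then have w1: "W' ! i = 1" using i unfolding W'_def m_def by (simp add: nth_append)
    have fm: "face_mono i 0 W' E = face_mono i 1 W' E"
      by (rule face_mono_01) (use i lW' w1 in auto)
    have "(\<Sum>j\<le>W' ! i. coef W' E i j * F i j) = coef W' E i 0 * F i 0 + coef W' E i 1 * F i 1"
      unfolding w1 by (simp add: One_nat_def)
    also have "\<dots> = 0" unfolding coef_def F_def fm by simp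
    finally show "(\<Sum>j\<le>W' ! i. coef W' E i j * F i j) = 0" .
  qed
  also have "(\<Sum>i<m. \<Sum>j\<le>W' ! i. coef W' E i j * F i j)
      = (\<Sum>i<length W. \<Sum>j\<le>W ! i. coef W e i j *
        (if x = (face_deg i W @ replicate r 1, tensor_mono (length W) bv (face_mono i j W e) k) then 1 else 0))"
    unfolding m_def
  proof (rule sum.cong[OF refl])
    fix i assume "i \<in> {..<length W}"
    then have i: "i < length W" by simp
    have wi: "W' ! i = W ! i" using i unfolding W'_def by (simp add: nth_append)
    have fd: "face_deg i W' = face_deg i W @ replicate r 1"
      using i unfolding W'_def face_deg_def by (simp add: nth_append list_update_append)
    have tl: "take i W' = take i W" using i unfolding W'_def by simp
    show "(\<Sum>j\<le>W' ! i. coef W' E i j * F i j) = (\<Sum>j\<le>W ! i. coef W e i j *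
        (if x = (face_deg i W @ replicate r 1, tensor_mono (length W) bv (face_mono i j W e) k) then 1 else 0))"
      unfolding wi
    proof (rule sum.cong[OF refl])
      fix j
      have tf: "face_mono i j W' E = tensor_mono (length W) bv (face_mono i j W e) k"
        unfolding W'_def E_def m_def by (rule tensor_face[OF i lb bv01 bvnz])
      have z: "face_mono i j W' E (replicate (length W') 0) = face_mono i j W e (replicate (length W) 0)"
      proof -
        have ne: "replicate (length W + r) 0 \<noteq> replicate (length W) 0 @ bv"
          using bvnz by (simp add: replicate_add)
        show ?thesis unfolding tf tm_split[OF bvnz'] lW' m_def using ne lb by simp
      qed
      show "coef W' E i j * F i j = coef W e i j *
        (if x = (face_deg i W @ replicate r 1, tensor_mono (length W) bv (face_mono i j W e) k) then 1 else 0)"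
        unfolding F_def fd tf using z wi tl by (simp add: coef_def)
    qed
  qed
  finally show ?thesis unfolding W'_def E_def m_def by simp
qed

lemma per_basis:
  assumes lb: "length bv = r" and bv01: "set bv \<subseteq> {0,1}" and bvnz: "bv \<noteq> replicate r 0"
  shows "linext basis_diff (tensor_basis bv y (W, e)) x = linext (tensor_basis bv y) (basis_diff (W, e)) x"
proof -
  define G where "G i j k = (face_deg i W @ replicate r 1, tensor_mono (length W) bv (face_mono i j W e) k)" for i j k
  define D where "D i j k = (if x = G i j k then 1 else 0 :: rat)" for i j k
  have tb: "tensor_basis bv y (W, e) = (\<lambda>b'. \<Sum>k\<le>degree y. coeff y k *
      (if b' = (W @ replicate r 1, tensor_mono (length W) bv e k) then 1 else 0))"
    unfolding tensor_basis_def using lb by simp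
  have "linext basis_diff (tensor_basis bv y (W, e)) x
      = (\<Sum>k\<le>degree y. coeff y k * basis_diff (W @ replicate r 1, tensor_mono (length W) bv e k) x)"
    unfolding tb by (rule linext_deltas) simp
  also have "\<dots> = (\<Sum>k\<le>degree y. coeff y k * (\<Sum>i<length W. \<Sum>j\<le>W ! i. coef W e i j * D i j k))"
    unfolding C1[OF lb bv01 bvnz] D_def G_def ..
  also have "\<dots> = (\<Sum>k\<le>degree y. \<Sum>i<length W. \<Sum>j\<le>W ! i. coeff y k * (coef W e i j * D i j k))"
    by (simp add: sum_distrib_left)
  also have "\<dots> = (\<Sum>i<length W. \<Sum>k\<le>degree y. \<Sum>j\<le>W ! i. coeff y k * (coef W e i j * D i j k))"
    by (rule sum.swap)
  also have "\<dots> = (\<Sum>i<length W. \<Sum>j\<le>W ! i. \<Sum>k\<le>degree y. coeff y k * (coef W e i j * D i j k))"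
    by (rule sum.cong[OF refl], rule sum.swap)
  also have "\<dots> = (\<Sum>i<length W. \<Sum>j\<le>W ! i. coef W e i j * (\<Sum>k\<le>degree y. coeff y k * D i j k))"
    by (simp add: sum_distrib_left mult.left_commute)
  also have "\<dots> = (\<Sum>i<length W. \<Sum>j\<le>W ! i. coef W e i j * tensor_basis bv y (face_deg i W, face_mono i j W e) x)"
    unfolding tensor_basis_def D_def G_def using lb by (simp add: face_deg_def)
  also have "\<dots> = linext (tensor_basis bv y) (basis_diff (W, e)) x"
    unfolding bd_form by (rule linext_deltas2[symmetric]) auto
  finally show ?thesis .
qed

lemma supp_tb: "finite {x. tensor_basis bv y b x \<noteq> 0}"
proof (rule finite_subset)
  show "finite ((\<lambda>k. (fst b @ replicate (length bv) 1, tensor_mono (length (fst b)) bv (snd b) k)) ` {..degree y})"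
    by simp
  show "{x. tensor_basis bv y b x \<noteq> 0} \<subseteq> (\<lambda>k. (fst b @ replicate (length bv) 1, tensor_mono (length (fst b)) bv (snd b) k)) ` {..degree y}"
  proof
    fix x assume "x \<in> {x. tensor_basis bv y b x \<noteq> 0}"
    then have "\<exists>k\<in>{..degree y}. coeff y k * (if x = (fst b @ replicate (length bv) 1, tensor_mono (length (fst b)) bv (snd b) k) then 1 else 0) \<noteq> 0"
      unfolding tensor_basis_def mem_Collect_eq
    proof (rule contrapos_np)
      assume "\<not> ?thesis" then show "(\<Sum>k\<le>degree y. coeff y k * (if x = (fst b @ replicate (length bv) 1, tensor_mono (length (fst b)) bv (snd b) k) then 1 else 0)) = 0"
        by (intro sum.neutral) blast
    qed
    then show "x \<in> (\<lambda>k. (fst b @ replicate (length bv) 1, tensor_mono (length (fst b)) bv (snd b) k)) ` {..degree y}"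
      by (auto split: if_splits)
  qed
qed

lemma supp_bd: "finite {x. basis_diff b x \<noteq> 0}"
proof -
  obtain W e where b: "b = (W, e)" by fastforce
  define g where "g = (\<lambda>(i, j). (face_deg i W, face_mono i j W e))"
  show ?thesis
  proof (rule finite_subset)
    show "finite (g ` Sigma {..<length W} (\<lambda>i. {..W ! i}))" by (simp add: finite_SigmaI)
    show "{x. basis_diff b x \<noteq> 0} \<subseteq> g ` Sigma {..<length W} (\<lambda>i. {..W ! i})"
    proof
      fix x assume "x \<in> {x. basis_diff b x \<noteq> 0}"
      then have "\<exists>i\<in>{..<length W}. (\<Sum>j\<le>W ! i. coef W e i j * (if x = (face_deg i W, face_mono i j W e) then 1 else 0)) \<noteq> 0"
        unfolding b bd_form mem_Collect_eq
      proof (rule contrapos_np)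
        assume "\<not> ?thesis" then show "(\<Sum>i<length W. \<Sum>j\<le>W ! i. coef W e i j * (if x = (face_deg i W, face_mono i j W e) then 1 else 0)) = 0"
          by (intro sum.neutral) blast
      qed
      then obtain i where i: "i \<in> {..<length W}" and "(\<Sum>j\<le>W ! i. coef W e i j * (if x = (face_deg i W, face_mono i j W e) then 1 else 0)) \<noteq> 0"
        by blast
      then have "\<exists>j\<in>{..W ! i}. coef W e i j * (if x = (face_deg i W, face_mono i j W e) then 1 else 0) \<noteq> 0"
        by (meson sum.neutral)
      then obtain j where "j \<in> {..W ! i}" "x = (face_deg i W, face_mono i j W e)"
        by (auto split: if_splits)
      then show "x \<in> g ` Sigma {..<length W} (\<lambda>i. {..W ! i})" using i unfolding g_def by force
    qed
  qed
qed

theorem lemma4p7: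
  fixes m n :: nat and bv :: "nat list" and y :: "rat poly" and c :: chain
  assumes "1 \<le> m" and "m < n"
    and "length bv = n - m" and "set bv \<subseteq> {0, 1}" and "bv \<noteq> replicate (n - m) 0"
    and "finite {b. c b \<noteq> 0}"
    and "\<forall>b. c b \<noteq> 0 \<longrightarrow> valid_basis m b"
  shows "chain_diff (tensor_map bv y c) = tensor_map bv y (chain_diff c)"
proof (rule ext)
  fix x
  have "chain_diff (tensor_map bv y c) x = (\<Sum>b\<in>{b. c b \<noteq> 0}. c b * linext basis_diff (tensor_basis bv y b) x)"
    unfolding chain_diff_def tensor_map_def by (rule linext_linext[OF assms(6) supp_tb])
  also have "\<dots> = (\<Sum>b\<in>{b. c b \<noteq> 0}. c b * linext (tensor_basis bv y) (basis_diff b) x)"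
  proof (rule sum.cong[OF refl])
    fix b :: basis
    obtain W e where b: "b = (W, e)" by fastforce
    show "c b * linext basis_diff (tensor_basis bv y b) x = c b * linext (tensor_basis bv y) (basis_diff b) x"
      unfolding b using per_basis[OF assms(3,4,5)] by simp
  qed
  also have "\<dots> = tensor_map bv y (chain_diff c) x"
    unfolding chain_diff_def tensor_map_def by (rule linext_linext[OF assms(6) supp_bd, symmetric])
  finally show "chain_diff (tensor_map bv y c) x = tensor_map bv y (chain_diff c) x" .
qed

end
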